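(* Let $\Delta$ be a simplicial complex on vertex set $[n]$. Then there is a collection $\mathcal{X}=(X_1,\dots,X_n)$ of discrete subsets of $\mathbb{R}$, each containing $0$, such that $\Delta=\Delta(\mathcal{X};\mu)$ for some $\mu\in\mathbb{R}$. Moreover, there is a collection $\mathcal{X}=(X_1,\dots,X_n)$ of contractible subsets of $\mathbb{R}^2$, each containing the origin, and a point $\mu\in\mathbb{R}^2$ with $\Delta=\Delta(\mathcal{X};\mu)$.
   Context: For arbitrary sets $X_1,\dots,X_n\subseteq\mathbb{R}^d$ containing the origin and $\sigma\subseteq[n]$, write $X_\sigma=\sum_{i\in\sigma}X_i=\{\sum_{i\in\sigma}x_i: x_i\in X_i\}$ (Minkowski sum), with $X_\emptyset=\{0\}$. For $\mu\in\mathbb{R}^d$, the Minkowski complex $\Delta(\mathcal{X};\mu)$ is the simplicial complex on vertex set $[n]$ whose faces are the $\sigma\subseteq[n]$ with $\mu\notin X_\sigma$. *)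

theory Defs
  imports "HOL-Analysis.Analysis"
begin

definition simplicial_complex :: "nat \<Rightarrow> nat set set \<Rightarrow> bool" where
  "simplicial_complex n \<Delta> \<longleftrightarrow> \<Delta> \<subseteq> Pow {1..n} \<and> (\<forall>\<sigma>\<in>\<Delta>. \<forall>\<tau>. \<tau> \<subseteq> \<sigma> \<longrightarrow> \<tau> \<in> \<Delta>)"

definition msum :: "(nat \<Rightarrow> 'a::comm_monoid_add set) \<Rightarrow> nat set \<Rightarrow> 'a set" where
  "msum X \<sigma> = {(\<Sum>i\<in>\<sigma>. x i) | x. \<forall>i\<in>\<sigma>. x i \<in> X i}"

definition minkowski_complex :: "nat \<Rightarrow> (nat \<Rightarrow> 'a::comm_monoid_add set) \<Rightarrow> 'a \<Rightarrow> nat set set" where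
  "minkowski_complex n X \<mu> = {\<sigma>. \<sigma> \<subseteq> {1..n} \<and> \<mu> \<notin> msum X \<sigma>}"

end

theory Submission imports Defs begin

definition e1 :: "real^2" where "e1 = axis 1 1"
definition e2 :: "real^2" where "e2 = axis 2 1"

lemma e_comp [simp]: "e1 $ 1 = 1" "e1 $ 2 = 0" "e2 $ 1 = 0" "e2 $ 2 = 1"
  by (auto simp: e1_def e2_def axis_def)

definition lift :: "real set \<Rightarrow> (real^2) set" where
  "lift S = (\<lambda>(l,x). (l*x) *\<^sub>R e1 + (1-l) *\<^sub>R e2) ` ({0..1} \<times> S)"

lemma lift_zero: "0 \<in> S \<Longrightarrow> 0 \<in> lift S"
  unfolding lift_def by (rule image_eqI[where x="(1,0)"]) auto

lemma lift_contractible: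
  assumes "0 \<in> S" shows "contractible (lift S)"
proof (rule starlike_imp_contractible)
  have e2in: "e2 \<in> lift S"
    unfolding lift_def using assms by (intro image_eqI[where x="(0,0)"]) auto
  have "closed_segment e2 p \<subseteq> lift S" if "p \<in> lift S" for p
  proof
    fix q assume q: "q \<in> closed_segment e2 p"
    from that obtain l x where lx: "l \<in> {0..1}" "x \<in> S" "p = (l*x) *\<^sub>R e1 + (1-l) *\<^sub>R e2"
      unfolding lift_def by auto
    from q obtain u where u: "0 \<le> u" "u \<le> 1" "q = (1-u) *\<^sub>R e2 + u *\<^sub>R p"
      unfolding closed_segment_def by auto
    have "q = ((u*l)*x) *\<^sub>R e1 + (1-u*l) *\<^sub>R e2"
      using u(3) lx(3) by (simp add: algebra_simps)
    moreover have "u*l \<in> {0..1}" using u lx(1) by (auto intro: mult_le_one)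
    ultimately show "q \<in> lift S" unfolding lift_def using lx(2)
      by (intro image_eqI[where x="(u*l,x)"]) auto
  qed
  then show "starlike (lift S)" unfolding starlike_def using e2in by blast
qed

lemma lift_msum:
  assumes "finite \<sigma>"
  shows "(\<mu> *\<^sub>R e1 \<in> msum (\<lambda>i. lift (X i)) \<sigma>) \<longleftrightarrow> \<mu> \<in> msum X \<sigma>"
proof
  assume "\<mu> \<in> msum X \<sigma>"
  then obtain x where x: "\<forall>i\<in>\<sigma>. x i \<in> X i" "\<mu> = (\<Sum>i\<in>\<sigma>. x i)" unfolding msum_def by auto
  have "\<forall>i\<in>\<sigma>. x i *\<^sub>R e1 \<in> lift (X i)"
    unfolding lift_def using x(1) by (auto intro: image_eqI[where x="(1,_)"])
  moreover have "\<mu> *\<^sub>R e1 = (\<Sum>i\<in>\<sigma>. x i *\<^sub>R e1)" using x(2) by (simp add: scaleR_sum_left)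
  ultimately show "\<mu> *\<^sub>R e1 \<in> msum (\<lambda>i. lift (X i)) \<sigma>" unfolding msum_def by blast
next
  assume "\<mu> *\<^sub>R e1 \<in> msum (\<lambda>i. lift (X i)) \<sigma>"
  then obtain y where y: "\<forall>i\<in>\<sigma>. y i \<in> lift (X i)" "\<mu> *\<^sub>R e1 = (\<Sum>i\<in>\<sigma>. y i)"
    unfolding msum_def by auto
  have form: "\<exists>l x. l \<in> {0..1} \<and> x \<in> X i \<and> y i = (l*x) *\<^sub>R e1 + (1-l) *\<^sub>R e2" if "i \<in> \<sigma>" for i
  proof -
    have "y i \<in> lift (X i)" using y(1) that by blast
    then obtain p where "p \<in> {0..1} \<times> X i" "y i = (case p of (l,x) \<Rightarrow> (l*x) *\<^sub>R e1 + (1-l) *\<^sub>R e2)"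
      unfolding lift_def by blast
    then show ?thesis by (cases p) auto
  qed
  have nn: "y i $ 2 \<ge> 0" if "i \<in> \<sigma>" for i
    using form[OF that] by auto
  have "(\<Sum>i\<in>\<sigma>. y i $ 2) = 0"
    using arg_cong[OF y(2), of "\<lambda>v. v $ 2"] by simp
  then have z: "\<forall>i\<in>\<sigma>. y i $ 2 = 0" using sum_nonneg_eq_0_iff[OF assms, of "\<lambda>i. y i $ 2"] nn by simp
  have inX: "y i $ 1 \<in> X i" if iin: "i \<in> \<sigma>" for i
  proof -
    obtain l x where "l \<in> {0..1}" "x \<in> X i" "y i = (l*x) *\<^sub>R e1 + (1-l) *\<^sub>R e2"
      using form[OF iin] by blast
    moreover from this z iin have "l = 1" by auto
    ultimately show ?thesis by simp
  qed
  have "\<mu> = (\<Sum>i\<in>\<sigma>. y i $ 1)"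
    using arg_cong[OF y(2), of "\<lambda>v. v $ 1"] by simp
  then show "\<mu> \<in> msum X \<sigma>" unfolding msum_def using inX by blast
qed


lemma pow2_sum_lt: "A \<subseteq> {..<q} \<Longrightarrow> (\<Sum>k\<in>A. (2::nat)^k) < 2^q"
proof -
  assume "A \<subseteq> {..<q}"
  then have "(\<Sum>k\<in>A. (2::nat)^k) \<le> (\<Sum>k<q. 2^k)" by (intro sum_mono2) auto
  also have "(\<Sum>k<q. (2::nat)^k) < 2^q" by (induction q) auto
  finally show ?thesis .
qed

lemma pow2_sum_lt_real: "A \<subseteq> {..<q} \<Longrightarrow> (\<Sum>k\<in>A. (2::real)^k) < 2^q"
proof -
  assume "A \<subseteq> {..<q}"
  then have "real (\<Sum>k\<in>A. (2::nat)^k) < real (2^q)" using pow2_sum_lt by (simp only: of_nat_less_iff)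
  moreover have "real (\<Sum>k\<in>A. (2::nat)^k) = (\<Sum>k\<in>A. (2::real)^k)" by simp
  ultimately show ?thesis by simp
qed

lemma pow2_sum_inj_nat:
  "A \<subseteq> {..<q} \<Longrightarrow> B \<subseteq> {..<q} \<Longrightarrow> (\<Sum>k\<in>A. (2::nat)^k) = (\<Sum>k\<in>B. 2^k) \<Longrightarrow> A = B"
proof (induction q arbitrary: A B)
  case 0 then show ?case by auto
next
  case (Suc q)
  have fA: "finite A" "finite B" using Suc.prems finite_subset by auto
  have A': "A - {q} \<subseteq> {..<q}" "B - {q} \<subseteq> {..<q}" using Suc.prems by auto
  have sA: "(\<Sum>k\<in>A. (2::nat)^k) = (if q \<in> A then 2^q else 0) + (\<Sum>k\<in>A-{q}. 2^k)"
    using fA sum.remove[OF fA(1), of q "\<lambda>k. (2::nat)^k"] by auto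
  have sB: "(\<Sum>k\<in>B. (2::nat)^k) = (if q \<in> B then 2^q else 0) + (\<Sum>k\<in>B-{q}. 2^k)"
    using fA sum.remove[OF fA(2), of q "\<lambda>k. (2::nat)^k"] by auto
  have lA: "(\<Sum>k\<in>A-{q}. (2::nat)^k) < 2^q" "(\<Sum>k\<in>B-{q}. (2::nat)^k) < 2^q"
    using pow2_sum_lt A' by auto
  have "(q \<in> A) = (q \<in> B)"
  proof (rule ccontr)
    assume "(q \<in> A) \<noteq> (q \<in> B)"
    then consider "q \<in> A" "q \<notin> B" | "q \<in> B" "q \<notin> A" by blast
    then show False
    proof cases
      case 1
      then have "(\<Sum>k\<in>A. (2::nat)^k) \<ge> 2^q" "(\<Sum>k\<in>B. (2::nat)^k) < 2^q"
        using sA sB lA by simp_all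
      then show False using Suc.prems(3) by linarith
    next
      case 2
      then have "(\<Sum>k\<in>B. (2::nat)^k) \<ge> 2^q" "(\<Sum>k\<in>A. (2::nat)^k) < 2^q"
        using sA sB lA by simp_all
      then show False using Suc.prems(3) by linarith
    qed
  qed
  then have "(\<Sum>k\<in>A-{q}. (2::nat)^k) = (\<Sum>k\<in>B-{q}. 2^k)"
  proof -
    have "(if q \<in> A then (2::nat)^q else 0) = (if q \<in> B then 2^q else 0)"
      using \<open>(q \<in> A) = (q \<in> B)\<close> by simp
    then show ?thesis using sA sB Suc.prems(3) by linarith
  qed
  then have "A - {q} = B - {q}" using Suc.IH A' by blast
  then show ?case using \<open>(q \<in> A) = (q \<in> B)\<close> by blast
qed

lemma pow2_sum_inj:
  assumes "finite A" "finite B" "(\<Sum>k\<in>A. (2::real)^k) = (\<Sum>k\<in>B. 2^k)"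
  shows "A = B"
proof -
  obtain q where "A \<subseteq> {..<q}" "B \<subseteq> {..<q}"
    using assms(1,2) by (metis finite_Un finite_nat_iff_bounded le_sup_iff)
  moreover have "real (\<Sum>k\<in>A. (2::nat)^k) = real (\<Sum>k\<in>B. 2^k)" using assms(3) by simp
  ultimately show ?thesis using pow2_sum_inj_nat by (metis of_nat_eq_iff)
qed


lemma part1:
  assumes sc: "simplicial_complex n \<Delta>"
  shows "\<exists>(X :: nat \<Rightarrow> real set) (\<mu> :: real).
            (\<forall>i\<in>{1..n}. discrete (X i) \<and> 0 \<in> X i) \<and> \<Delta> = minkowski_complex n X \<mu>"
proof (cases "\<Delta> = {}")
  case True
  have "0 \<in> msum (\<lambda>_. {0::real}) \<sigma>" for \<sigma>
    unfolding msum_def by (rule CollectI, rule exI[where x="\<lambda>_. 0"]) simp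
  then have "minkowski_complex n (\<lambda>_. {0::real}) 0 = {}"
    unfolding minkowski_complex_def by auto
  moreover have "discrete {0::real}" using discrete_compact_finite_iff by blast
  ultimately show ?thesis using True by (intro exI[where x="\<lambda>_. {0::real}"] exI[where x=0]) auto
next
  case False
  have subs: "\<Delta> \<subseteq> Pow {1..n}" and closed: "\<And>\<sigma> \<tau>. \<sigma> \<in> \<Delta> \<Longrightarrow> \<tau> \<subseteq> \<sigma> \<Longrightarrow> \<tau> \<in> \<Delta>"
    using sc unfolding simplicial_complex_def by blast+
  have emp: "{} \<in> \<Delta>" using False closed by blast
  define N where "N = Pow {1..n} - \<Delta>"
  have Nprop: "\<tau> \<noteq> {}" "finite \<tau>" "\<tau> \<subseteq> {1..n}" "\<tau> \<notin> \<Delta>" if "\<tau> \<in> N" for \<tau>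
    using that emp unfolding N_def by (auto intro: finite_subset)
  have finN: "finite N" unfolding N_def by simp
  define P where "P = Sigma N (\<lambda>\<tau>. \<tau>)"
  have finP: "finite P" unfolding P_def using finN Nprop(2) by auto
  obtain idx :: "nat set \<times> nat \<Rightarrow> nat" and Q where idxP: "idx ` P = {i. i < Q}" and inj: "inj_on idx P"
    using finite_imp_inj_to_nat_seg[OF finP] by blast
  have idx_lt: "idx (\<tau>, j) < Q" if "\<tau> \<in> N" "j \<in> \<tau>" for \<tau> j
    using idxP that unfolding P_def by blast
  have idx_eq: "\<tau> = \<tau>' \<and> j = j'" if "\<tau> \<in> N" "j \<in> \<tau>" "\<tau>' \<in> N" "j' \<in> \<tau>'" "idx (\<tau>, j) = idx (\<tau>', j')" for \<tau> j \<tau>' j'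
    using inj that unfolding P_def inj_on_def by blast
  define e where "e \<tau> = (\<Sum>j\<in>\<tau>. (2::real)^(idx(\<tau>,j)))" for \<tau>
  define M where "M = (2::real)^(Suc Q)"
  define v where "v \<tau> i = (2::real)^(idx(\<tau>,i)) + (if i = Min \<tau> then M - e \<tau> else 0)" for \<tau> i
  define X where "X i = insert 0 {v \<tau> i | \<tau>. \<tau> \<in> N \<and> i \<in> \<tau>}" for i
  have e_img: "e \<tau> = (\<Sum>k\<in>(\<lambda>j. idx(\<tau>,j)) ` \<tau>. (2::real)^k)" if "\<tau> \<in> N" for \<tau>
  proof -
    have "inj_on (\<lambda>j. idx(\<tau>,j)) \<tau>" using idx_eq that unfolding inj_on_def by blast
    then show ?thesis unfolding e_def by (simp add: sum.reindex)
  qed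
  have e_bd: "0 \<le> e \<tau> \<and> e \<tau> < 2^Q" if "\<tau> \<in> N" for \<tau>
  proof
    show "0 \<le> e \<tau>" unfolding e_def by (intro sum_nonneg) simp
    have "(\<lambda>j. idx(\<tau>,j)) ` \<tau> \<subseteq> {..<Q}" using idx_lt that by auto
    then show "e \<tau> < 2^Q" using e_img[OF that] pow2_sum_lt_real by simp
  qed
  have key: "\<sigma> \<in> \<Delta> \<longleftrightarrow> M \<notin> msum X \<sigma>" if sig: "\<sigma> \<subseteq> {1..n}" for \<sigma>
  proof
    assume "M \<notin> msum X \<sigma>"
    show "\<sigma> \<in> \<Delta>"
    proof (rule ccontr)
      assume "\<sigma> \<notin> \<Delta>"
      then have sN: "\<sigma> \<in> N" using sig unfolding N_def by auto
      have "(\<Sum>i\<in>\<sigma>. v \<sigma> i) = (\<Sum>i\<in>\<sigma>. (2::real)^(idx(\<sigma>,i))) + (\<Sum>i\<in>\<sigma>. (if i = Min \<sigma> then M - e \<sigma> else 0))"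
        unfolding v_def by (simp add: sum.distrib)
      also have "\<dots> = e \<sigma> + (M - e \<sigma>)"
        using Min_in[OF Nprop(2)[OF sN] Nprop(1)[OF sN]] Nprop(2)[OF sN] unfolding e_def by simp
      finally have "M = (\<Sum>i\<in>\<sigma>. v \<sigma> i)" by simp
      moreover have "\<forall>i\<in>\<sigma>. v \<sigma> i \<in> X i" unfolding X_def using sN by blast
      ultimately have "M \<in> msum X \<sigma>" unfolding msum_def by blast
      then show False using \<open>M \<notin> msum X \<sigma>\<close> by blast
    qed
  next
    assume sD: "\<sigma> \<in> \<Delta>"
    show "M \<notin> msum X \<sigma>"
    proof
      assume "M \<in> msum X \<sigma>"
      then obtain x where x: "\<forall>i\<in>\<sigma>. x i \<in> X i" "M = (\<Sum>i\<in>\<sigma>. x i)" unfolding msum_def by auto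
      have fs: "finite \<sigma>" using sig finite_subset by blast
      define S where "S = {i\<in>\<sigma>. x i \<noteq> 0}"
      have fS: "finite S" "S \<subseteq> \<sigma>" using fs unfolding S_def by auto
      define t where "t i = (SOME \<tau>. \<tau> \<in> N \<and> i \<in> \<tau> \<and> x i = v \<tau> i)" for i
      have tprop: "t i \<in> N \<and> i \<in> t i \<and> x i = v (t i) i" if "i \<in> S" for i
      proof -
        have "\<exists>\<tau>. \<tau> \<in> N \<and> i \<in> \<tau> \<and> x i = v \<tau> i" using x(1) that unfolding S_def X_def by auto
        then show ?thesis unfolding t_def by (rule someI_ex)
      qed
      have "M = (\<Sum>i\<in>S. x i)"
        using x(2) sum.mono_neutral_right[OF fs fS(2), of x] unfolding S_def by auto
      also have "\<dots> = (\<Sum>i\<in>S. v (t i) i)" using tprop by (intro sum.cong) auto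
      finally have M1: "M = (\<Sum>i\<in>S. v (t i) i)" .
      define g where "g i = idx (t i, i)" for i
      define E where "E = (\<Sum>i\<in>S. (2::real)^(g i))"
      define Ld where "Ld = {i\<in>S. i = Min (t i)}"
      have fLd: "finite Ld" using fS unfolding Ld_def by auto
      have "(\<Sum>i\<in>S. v (t i) i) = E + (\<Sum>i\<in>S. if i = Min (t i) then M - e (t i) else 0)"
        unfolding v_def E_def g_def by (simp add: sum.distrib)
      also have "(\<Sum>i\<in>S. if i = Min (t i) then M - e (t i) else 0) = (\<Sum>i\<in>Ld. M - e (t i))"
        unfolding Ld_def using sum.inter_filter[OF fS(1), of "\<lambda>i. M - e (t i)" "\<lambda>i. i = Min (t i)"] by simp
      finally have M2: "M = E + (\<Sum>i\<in>Ld. M - e (t i))" using M1 by simp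
      have ginj: "inj_on g S"
        unfolding inj_on_def g_def using tprop idx_eq by metis
      have E_img: "E = (\<Sum>k\<in>g ` S. (2::real)^k)" unfolding E_def using ginj by (simp add: sum.reindex)
      have "g ` S \<subseteq> {..<Q}" unfolding g_def using tprop idx_lt by auto
      then have E_bd: "0 \<le> E" "E < 2^Q" using E_img pow2_sum_lt_real unfolding E_def
        by (auto intro: sum_nonneg)
      have MQ: "M = 2 * 2^Q" unfolding M_def by simp
      have term_pos: "M - e (t i) > 2^Q" if "i \<in> Ld" for i
        using e_bd[of "t i"] tprop[of i] that MQ unfolding Ld_def by auto
      have nn: "0 \<le> M - e (t i)" if "i \<in> Ld" for i
        using term_pos[OF that] zero_less_power[of "2::real" Q] by linarith
      have "Ld \<noteq> {}"
      proof
        assume "Ld = {}"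
        then show False using M2 E_bd MQ by simp
      qed
      moreover have "\<not> (\<exists>a\<in>Ld. \<exists>b\<in>Ld. a \<noteq> b)"
      proof
        assume "\<exists>a\<in>Ld. \<exists>b\<in>Ld. a \<noteq> b"
        then obtain a b where ab: "a \<in> Ld" "b \<in> Ld" "a \<noteq> b" by blast
        have "(\<Sum>i\<in>{a,b}. M - e (t i)) \<le> (\<Sum>i\<in>Ld. M - e (t i))"
          using ab fLd nn by (intro sum_mono2) auto
        moreover have "(\<Sum>i\<in>{a,b}. M - e (t i)) = (M - e (t a)) + (M - e (t b))" using ab by simp
        ultimately show False using term_pos[OF ab(1)] term_pos[OF ab(2)] M2 E_bd MQ by linarith
      qed
      ultimately obtain m where Ldm: "Ld = {m}" by blast
      then have mS: "m \<in> S" unfolding Ld_def by auto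
      define \<tau> where "\<tau> = t m"
      have tN: "\<tau> \<in> N" using tprop[OF mS] unfolding \<tau>_def by blast
      have "E = e \<tau>" using M2 Ldm unfolding \<tau>_def by simp
      then have "g ` S = (\<lambda>j. idx(\<tau>,j)) ` \<tau>"
        using pow2_sum_inj[of "g ` S" "(\<lambda>j. idx(\<tau>,j)) ` \<tau>"] E_img e_img[OF tN] fS(1) Nprop(2)[OF tN] by auto
      have "\<tau> \<subseteq> \<sigma>"
      proof
        fix j assume j: "j \<in> \<tau>"
        then have "idx(\<tau>,j) \<in> g ` S" using \<open>g ` S = _\<close> by auto
        then obtain i where i: "i \<in> S" "idx(\<tau>,j) = idx(t i, i)" unfolding g_def by auto
        then have "j = i" using idx_eq[OF tN j, of "t i" i] tprop[OF i(1)] by blast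
        then show "j \<in> \<sigma>" using i fS(2) by blast
      qed
      then have "\<tau> \<in> \<Delta>" using closed sD by blast
      then show False using Nprop(4)[OF tN] by blast
    qed
  qed
  have "\<Delta> = minkowski_complex n X M"
    unfolding minkowski_complex_def using key subs by blast
  moreover have "discrete (X i) \<and> 0 \<in> X i" for i
  proof -
    have "X i \<subseteq> insert 0 ((\<lambda>\<tau>. v \<tau> i) ` N)" unfolding X_def by auto
    then have "finite (X i)" using finN finite_subset by blast
    then show ?thesis using discrete_compact_finite_iff unfolding X_def by blast
  qed
  ultimately show ?thesis by blast
qed

theorem proposition7:
  fixes n :: nat and \<Delta> :: "nat set set"
  assumes "simplicial_complex n \<Delta>"
  shows "(\<exists>(X :: nat \<Rightarrow> real set) (\<mu> :: real).
            (\<forall>i\<in>{1..n}. discrete (X i) \<and> 0 \<in> X i) \<and> \<Delta> = minkowski_complex n X \<mu>)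
       \<and> (\<exists>(X :: nat \<Rightarrow> (real^2) set) (\<mu> :: real^2).
            (\<forall>i\<in>{1..n}. contractible (X i) \<and> 0 \<in> X i) \<and> \<Delta> = minkowski_complex n X \<mu>)"
proof -
  obtain X and \<mu> :: real where X: "\<forall>i\<in>{1..n}. discrete (X i) \<and> 0 \<in> X i"
    and D: "\<Delta> = minkowski_complex n X \<mu>"
    using part1[OF assms] by blast
  have "minkowski_complex n (\<lambda>i. lift (X i)) (\<mu> *\<^sub>R e1) = minkowski_complex n X \<mu>"
    unfolding minkowski_complex_def using lift_msum finite_subset[OF _ finite_atLeastAtMost]
    by blast
  moreover have "\<forall>i\<in>{1..n}. contractible (lift (X i)) \<and> 0 \<in> lift (X i)"
    using X lift_contractible lift_zero by blast
  ultimately show ?thesis using X D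
    by (intro conjI exI[where x=X] exI[where x=\<mu>] exI[where x="\<lambda>i. lift (X i)"] exI[where x="\<mu> *\<^sub>R e1"]) auto
qed

end
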